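(* Let $L\in\{4,5\}$ and let $w:\{0,1\}^L\to\mathbb{R}_{\ge 0}$ be a generic fitness landscape that induces a staircase triangulation of $[0,1]^L$. Then the fitness landscape has at most four peaks.
   Context: Genotypes $g\in\{0,1\}^L$ are identified with vertices of $[0,1]^L$. The triangulation induced by $w$ is the regular subdivision of $[0,1]^L$ obtained by projecting onto $[0,1]^L$ the upper faces of $\mathrm{conv}\{(g,w_g)\}\subset\mathbb{R}^{L+1}$; $w$ is generic if all $w_g$ are distinct and this subdivision is a triangulation. A peak is a genotype all of whose Hamming-distance-$1$ neighbours have strictly lower fitness. The standard staircase triangulation consists of the $L!$ simplices $\{g_0,g_1,\dots,g_L\}$ where $g_0=0\cdots0$, $g_L=1\cdots1$, and each $g_{k+1}$ is obtained from $g_k$ by changing one $0$ to $1$. A staircase triangulation is any image of the standard staircase triangulation under a symmetry of the cube (coordinate permutations and bit flips). *)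

theory Defs
  imports Complex_Main
begin

text \<open>A genotype in {0,1}^L is encoded as the set of coordinates equal to 1,
  a subset of {..<L}. The vertex of [0,1]^L is x_i = 1 iff i is in the set.\<close>

definition genotypes :: "nat \<Rightarrow> nat set set" where
  "genotypes L = {g. g \<subseteq> {..<L}}"

definition coord :: "nat set \<Rightarrow> nat \<Rightarrow> real" where
  "coord g i = (if i \<in> g then 1 else 0)"

definition aff :: "nat \<Rightarrow> (nat \<Rightarrow> real) \<Rightarrow> real \<Rightarrow> nat set \<Rightarrow> real" where
  "aff L a b g = b + (\<Sum>i<L. a i * coord g i)"

definition hamming_neighbour :: "nat set \<Rightarrow> nat set \<Rightarrow> bool" where
  "hamming_neighbour g h \<longleftrightarrow> card ((g - h) \<union> (h - g)) = 1"

text \<open>Cells of the regular subdivision: projections of upper faces of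
  conv{(g,w g)}, i.e. the sets of genotypes on which a non-vertical
  supporting hyperplane from above touches the lifted points.\<close>
definition upper_cell :: "nat \<Rightarrow> (nat set \<Rightarrow> real) \<Rightarrow> nat set set \<Rightarrow> bool" where
  "upper_cell L w S \<longleftrightarrow> (\<exists>a b. (\<forall>g\<in>genotypes L. w g \<le> aff L a b g) \<and>
       S = {g\<in>genotypes L. w g = aff L a b g})"

text \<open>A set of genotypes is full-dimensional iff its affine hull is R^L,
  i.e. no non-constant affine function vanishes on it.\<close>
definition full_dim :: "nat \<Rightarrow> nat set set \<Rightarrow> bool" where
  "full_dim L S \<longleftrightarrow> \<not> (\<exists>a b. (\<exists>i<L. a i \<noteq> 0) \<and> (\<forall>g\<in>S. aff L a b g = 0))"

definition max_cells :: "nat \<Rightarrow> (nat set \<Rightarrow> real) \<Rightarrow> nat set set set" where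
  "max_cells L w = {S. upper_cell L w S \<and> full_dim L S}"

text \<open>Generic: distinct values and the subdivision is a triangulation
  (every maximal cell is an L-simplex, i.e. has exactly L+1 points).\<close>
definition generic :: "nat \<Rightarrow> (nat set \<Rightarrow> real) \<Rightarrow> bool" where
  "generic L w \<longleftrightarrow> inj_on w (genotypes L) \<and> (\<forall>S\<in>max_cells L w. card S = L + 1)"

text \<open>Standard staircase triangulation: chains 0...0 = g_0 < ... < g_L = 1...1,
  each adding one coordinate; p lists the order in which coordinates are set.\<close>
definition staircase_std :: "nat \<Rightarrow> nat set set set" where
  "staircase_std L = {{p ` {..<k} | k. k \<le> L} | p. bij_betw p {..<L} {..<L}}"

definition cube_sym :: "(nat \<Rightarrow> nat) \<Rightarrow> nat set \<Rightarrow> nat set \<Rightarrow> nat set" where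
  "cube_sym \<sigma> F g = ((\<sigma> ` g) - F) \<union> (F - (\<sigma> ` g))"

definition staircase :: "nat \<Rightarrow> nat set set set \<Rightarrow> bool" where
  "staircase L T \<longleftrightarrow> (\<exists>\<sigma> F. bij_betw \<sigma> {..<L} {..<L} \<and> F \<subseteq> {..<L} \<and>
      T = (\<lambda>C. cube_sym \<sigma> F ` C) ` staircase_std L)"

definition peak :: "nat \<Rightarrow> (nat set \<Rightarrow> real) \<Rightarrow> nat set \<Rightarrow> bool" where
  "peak L w g \<longleftrightarrow> g \<in> genotypes L \<and>
     (\<forall>h\<in>genotypes L. hamming_neighbour g h \<longrightarrow> w h < w g)"

end

theory Submission
  imports Defs
begin


lemma genotypes_Pow: "genotypes L = Pow {..<L}"
  by (auto simp: genotypes_def)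

lemma comb:
  assumes Qs: "Q \<subseteq> Pow {..<5::nat}" and cond: "\<forall>g\<in>Q. \<forall>h\<in>Q. card (g - h) \<noteq> 1"
  shows "card Q \<le> 4"
proof -
  have finQ: "finite Q" using Qs finite_subset by blast
  have fing: "\<And>g. g \<in> Q \<Longrightarrow> finite g" using Qs finite_subset by blast
  have cardg: "\<And>g. g \<in> Q \<Longrightarrow> card g \<le> 5"
  proof -
    fix g assume "g \<in> Q" then have "g \<subseteq> {..<5}" using Qs by blast
    then show "card g \<le> 5" using card_mono[of "{..<5::nat}" g] by simp
  qed
  have sub0: "\<And>g h. g \<in> Q \<Longrightarrow> h \<in> Q \<Longrightarrow> card (g - h) = 0 \<Longrightarrow> g \<subseteq> h"
    using fing by (metis Diff_eq_empty_iff card_0_eq finite_Diff)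
  define Q1 where "Q1 = {g\<in>Q. card g \<le> 1}"
  define Q2 where "Q2 = {g\<in>Q. 2 \<le> card g \<and> card g \<le> 3}"
  define Q3 where "Q3 = {g\<in>Q. 4 \<le> card g}"
  have "Q = Q1 \<union> Q2 \<union> Q3" unfolding Q1_def Q2_def Q3_def by auto
  then have "card Q \<le> card Q1 + card Q2 + card Q3"
  proof -
    have "card (Q1 \<union> Q2 \<union> Q3) \<le> card (Q1 \<union> Q2) + card Q3" by (rule card_Un_le)
    moreover have "card (Q1 \<union> Q2) \<le> card Q1 + card Q2" by (rule card_Un_le)
    moreover have "card Q = card (Q1 \<union> Q2 \<union> Q3)" using \<open>Q = Q1 \<union> Q2 \<union> Q3\<close> by simp
    ultimately show ?thesis by linarith
  qed
  moreover have "card Q1 \<le> 1"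
  proof -
    have "\<forall>g\<in>Q1. \<forall>h\<in>Q1. g = h"
    proof (intro ballI)
      fix g h assume g: "g \<in> Q1" and h: "h \<in> Q1"
      have "card (g - h) \<le> 1" using g fing card_mono[of g "g - h"] unfolding Q1_def by force
      then have "card (g - h) = 0" using cond g h unfolding Q1_def by force
      moreover have "card (h - g) \<le> 1" using h fing card_mono[of h "h - g"] unfolding Q1_def by force
      then have "card (h - g) = 0" using cond g h unfolding Q1_def by force
      ultimately show "g = h" using sub0 g h unfolding Q1_def by blast
    qed
    then show ?thesis using card_le_Suc0_iff_eq[of Q1] finQ unfolding Q1_def by auto
  qed
  moreover have "card Q3 \<le> 1"
  proof -
    have c: "card (g - h) \<le> 1" if g: "g \<in> Q3" and h: "h \<in> Q3" for g h
    proof -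
      have "g - h \<subseteq> {..<5} - h" using g Qs unfolding Q3_def by blast
      then have "card (g - h) \<le> card ({..<5::nat} - h)" by (intro card_mono) auto
      moreover have "card ({..<5::nat} - h) = 5 - card h" using h Qs unfolding Q3_def
        by (subst card_Diff_subset) (auto intro: finite_subset)
      moreover have "4 \<le> card h" using h unfolding Q3_def by simp
      ultimately show ?thesis by linarith
    qed
    have "\<forall>g\<in>Q3. \<forall>h\<in>Q3. g = h"
    proof (intro ballI)
      fix g h assume g: "g \<in> Q3" and h: "h \<in> Q3"
      have "card (g - h) = 0" using c[OF g h] cond g h unfolding Q3_def by force
      moreover have "card (h - g) = 0" using c[OF h g] cond g h unfolding Q3_def by force
      ultimately show "g = h" using sub0 g h unfolding Q3_def by blast
    qed
    then show ?thesis using card_le_Suc0_iff_eq[of Q3] finQ unfolding Q3_def by auto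
  qed
  moreover have "card Q2 \<le> 2"
  proof (rule ccontr)
    assume "\<not> card Q2 \<le> 2"
    then have "3 \<le> card Q2" by simp
    then obtain T where T: "T \<subseteq> Q2" "card T = 3" by (meson obtain_subset_with_card_n)
    then obtain a b c where abc: "T = {a,b,c}" "a \<noteq> b" "b \<noteq> c" "a \<noteq> c"
      by (auto simp: card_3_iff)
    have inQ2: "a \<in> Q2" "b \<in> Q2" "c \<in> Q2" using T abc by auto
    have two: "card (x \<inter> y) + 2 \<le> card x" if x: "x \<in> Q2" and y: "y \<in> Q2" and xy: "x \<noteq> y" for x y
    proof -
      have xQ: "x \<in> Q" and yQ: "y \<in> Q" using x y unfolding Q2_def by auto
      have "card (x - y) \<ge> 2"
      proof (rule ccontr)
        assume "\<not> card (x - y) \<ge> 2"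
        then have "card (x - y) = 0" using cond xQ yQ by force
        then have "x \<subseteq> y" using sub0 xQ yQ by blast
        then have "card (y - x) = card y - card x" using fing xQ by (simp add: card_Diff_subset)
        moreover have "2 \<le> card x" "card y \<le> 3" using x y unfolding Q2_def by auto
        ultimately have "card (y - x) \<le> 1" by linarith
        then have "card (y - x) = 0" using cond xQ yQ by force
        then have "y \<subseteq> x" using sub0 xQ yQ by blast
        then show False using \<open>x \<subseteq> y\<close> xy by blast
      qed
      moreover have "card (x - y) = card x - card (x \<inter> y)"
        using fing xQ by (simp add: card_Diff_subset_Int)
      moreover have "card (x \<inter> y) \<le> card x" using fing xQ by (simp add: card_mono)
      ultimately show ?thesis by linarith
    qed
    have fa: "finite a" "finite b" "finite c" using inQ2 fing unfolding Q2_def by auto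
    have bonf: "card a + card b + card c \<le> card (a \<union> b \<union> c) + card (a \<inter> b) + card (a \<inter> c) + card (b \<inter> c)"
    proof -
      have 1: "card (a \<union> b) + card (a \<inter> b) = card a + card b" using fa card_Un_Int by metis
      have 2: "card (a \<union> b \<union> c) + card ((a \<union> b) \<inter> c) = card (a \<union> b) + card c"
        using fa card_Un_Int by (metis finite_UnI)
      have "(a \<union> b) \<inter> c = (a \<inter> c) \<union> (b \<inter> c)" by blast
      then have 3: "card ((a \<union> b) \<inter> c) \<le> card (a \<inter> c) + card (b \<inter> c)" by (metis card_Un_le)
      show ?thesis using 1 2 3 by linarith
    qed
    have "a \<union> b \<union> c \<subseteq> {..<5}" using inQ2 Qs unfolding Q2_def by blast
    then have "card (a \<union> b \<union> c) \<le> 5" using card_mono[of "{..<5::nat}"] by fastforce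
    moreover have "card (a \<inter> b) + 2 \<le> card a" using two inQ2 abc by blast
    moreover have "card (a \<inter> c) + 2 \<le> card c" using two[of c a] inQ2 abc by (metis Int_commute)
    moreover have "card (b \<inter> c) + 2 \<le> card b" using two inQ2 abc by blast
    ultimately show False using bonf by linarith
  qed
  ultimately show ?thesis by linarith
qed



lemma cs_genotypes:
  assumes "bij_betw \<sigma> {..<L} {..<L}" "F \<subseteq> {..<L}" "X \<in> genotypes L"
  shows "cube_sym \<sigma> F X \<in> genotypes L"
  using assms unfolding genotypes_def cube_sym_def bij_betw_def by auto

lemma cs_inj:
  assumes "bij_betw \<sigma> {..<L} {..<L}" "X \<in> genotypes L" "Y \<in> genotypes L"
    "cube_sym \<sigma> F X = cube_sym \<sigma> F Y"
  shows "X = Y"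
proof -
  have "\<sigma> ` X = \<sigma> ` Y" using assms(4) unfolding cube_sym_def by blast
  moreover have "inj_on \<sigma> {..<L}" using assms(1) unfolding bij_betw_def by blast
  moreover have "X \<subseteq> {..<L}" "Y \<subseteq> {..<L}" using assms(2,3) unfolding genotypes_def by auto
  ultimately show ?thesis using inj_on_image_eq_iff[of \<sigma> "{..<L}" X Y] by blast
qed

lemma cs_surj:
  assumes "bij_betw \<sigma> {..<L} {..<L}" "F \<subseteq> {..<L}" "h \<in> genotypes L"
  shows "\<exists>X\<in>genotypes L. cube_sym \<sigma> F X = h"
proof -
  define X where "X = {x\<in>{..<L}. \<sigma> x \<in> (h - F) \<union> (F - h)}"
  have "\<sigma> ` X = (h - F) \<union> (F - h)"
  proof
    show "\<sigma> ` X \<subseteq> (h - F) \<union> (F - h)" unfolding X_def by auto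
    show "(h - F) \<union> (F - h) \<subseteq> \<sigma> ` X"
    proof
      fix k assume k: "k \<in> (h - F) \<union> (F - h)"
      then have "k \<in> {..<L}" using assms unfolding genotypes_def by auto
      then have "k \<in> \<sigma> ` {..<L}" using assms(1) unfolding bij_betw_def by simp
      then obtain x where "x \<in> {..<L}" "\<sigma> x = k" by blast
      then show "k \<in> \<sigma> ` X" using k unfolding X_def by auto
    qed
  qed
  then have "cube_sym \<sigma> F X = h" unfolding cube_sym_def by auto
  moreover have "X \<in> genotypes L" unfolding X_def genotypes_def by auto
  ultimately show ?thesis by blast
qed

lemma cs_hamming:
  assumes "bij_betw \<sigma> {..<L} {..<L}" "X \<in> genotypes L" "Y \<in> genotypes L"
    "(X - Y) \<union> (Y - X) = {i}"
  shows "hamming_neighbour (cube_sym \<sigma> F X) (cube_sym \<sigma> F Y)"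
proof -
  have inj: "inj_on \<sigma> {..<L}" using assms(1) bij_betw_def by blast
  have XY: "X \<subseteq> {..<L}" "Y \<subseteq> {..<L}" using assms(2,3) unfolding genotypes_def by auto
  have "\<sigma> ` X - \<sigma> ` Y = \<sigma> ` (X - Y)" using inj XY by (metis Diff_subset inj_on_image_set_diff order_trans)
  moreover have "\<sigma> ` Y - \<sigma> ` X = \<sigma> ` (Y - X)" using inj XY by (metis Diff_subset inj_on_image_set_diff order_trans)
  moreover have "(cube_sym \<sigma> F X - cube_sym \<sigma> F Y) \<union> (cube_sym \<sigma> F Y - cube_sym \<sigma> F X)
      = (\<sigma> ` X - \<sigma> ` Y) \<union> (\<sigma> ` Y - \<sigma> ` X)" unfolding cube_sym_def by blast
  ultimately have "(cube_sym \<sigma> F X - cube_sym \<sigma> F Y) \<union> (cube_sym \<sigma> F Y - cube_sym \<sigma> F X)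
      = \<sigma> ` ((X - Y) \<union> (Y - X))" by (simp add: image_Un)
  then show ?thesis using assms(4) unfolding hamming_neighbour_def by simp
qed

lemma cs_coord:
  assumes "bij_betw \<sigma> {..<L} {..<L}" "X \<subseteq> {..<L}" "k < L"
  shows "coord (cube_sym \<sigma> F X) k = (if (inv_into {..<L} \<sigma> k \<in> X) \<noteq> (k \<in> F) then 1 else 0)"
proof -
  have inj: "inj_on \<sigma> {..<L}" and im: "\<sigma> ` {..<L} = {..<L}" using assms(1) unfolding bij_betw_def by auto
  have "k \<in> \<sigma> ` X \<longleftrightarrow> inv_into {..<L} \<sigma> k \<in> X"
  proof
    assume "k \<in> \<sigma> ` X"
    then obtain x where "x \<in> X" "k = \<sigma> x" by auto
    then show "inv_into {..<L} \<sigma> k \<in> X" using inj assms(2) by (metis inv_into_f_f subsetD)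
  next
    assume "inv_into {..<L} \<sigma> k \<in> X"
    moreover have "\<sigma> (inv_into {..<L} \<sigma> k) = k" using im assms(3) by (metis f_inv_into_f lessThan_iff)
    ultimately show "k \<in> \<sigma> ` X" by (metis image_eqI)
  qed
  then show ?thesis unfolding coord_def cube_sym_def by auto
qed

lemma aff_par:
  assumes "\<forall>k<L. coord g1 k + coord g2 k = coord g3 k + coord g4 k"
  shows "aff L a b g1 + aff L a b g2 = aff L a b g3 + aff L a b g4"
proof -
  have "(\<Sum>i<L. a i * coord g1 i) + (\<Sum>i<L. a i * coord g2 i) = (\<Sum>i<L. a i * (coord g1 i + coord g2 i))"
    by (simp add: sum.distrib distrib_left)
  also have "\<dots> = (\<Sum>i<L. a i * (coord g3 i + coord g4 i))" using assms by (intro sum.cong) auto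
  also have "\<dots> = (\<Sum>i<L. a i * coord g3 i) + (\<Sum>i<L. a i * coord g4 i)"
    by (simp add: sum.distrib distrib_left)
  finally show ?thesis unfolding aff_def by simp
qed

lemma mono_delta:
  fixes v :: "nat set \<Rightarrow> real"
  assumes sq: "\<And>S i j. S \<subseteq> {..<L} \<Longrightarrow> i < L \<Longrightarrow> j < L \<Longrightarrow> i \<noteq> j \<Longrightarrow> i \<notin> S \<Longrightarrow> j \<notin> S \<Longrightarrow>
     v (insert i S) + v (insert j S) < v S + v (insert j (insert i S))"
  shows "finite D \<Longrightarrow> A \<union> D \<subseteq> {..<L} \<Longrightarrow> i < L \<Longrightarrow> i \<notin> A \<union> D \<Longrightarrow>
     v (insert i A) - v A \<le> v (insert i (A \<union> D)) - v (A \<union> D)"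
proof (induction D rule: finite_induct)
  case empty
  then show ?case by simp
next
  case (insert x D)
  show ?case
  proof (cases "x \<in> A")
    case True
    then have "A \<union> insert x D = A \<union> D" by auto
    then show ?thesis using insert by simp
  next
    case False
    define S where "S = A \<union> D"
    have IH: "v (insert i A) - v A \<le> v (insert i S) - v S" using insert unfolding S_def by auto
    have "v (insert i S) + v (insert x S) < v S + v (insert x (insert i S))"
      using sq[of S i x] insert False unfolding S_def by auto
    moreover have "A \<union> insert x D = insert x S" "insert i (A \<union> insert x D) = insert x (insert i S)"
      unfolding S_def by auto
    ultimately show ?thesis using IH by simp
  qed
qed



lemma square:
  assumes st: "max_cells L w = (\<lambda>C. cube_sym \<sigma> F ` C) ` staircase_std L"
    and bj: "bij_betw \<sigma> {..<L} {..<L}" and FL: "F \<subseteq> {..<L}"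
    and S: "S \<subseteq> {..<L}" and ij: "i < L" "j < L" "i \<noteq> j" "i \<notin> S" "j \<notin> S"
  shows "w (cube_sym \<sigma> F (insert i S)) + w (cube_sym \<sigma> F (insert j S))
          < w (cube_sym \<sigma> F S) + w (cube_sym \<sigma> F (insert j (insert i S)))"
proof -
  let ?f = "cube_sym \<sigma> F"
  define R where "R = {..<L} - S - {i,j}"
  define xs where "xs = sorted_list_of_set S @ [i,j] @ sorted_list_of_set R"
  have finS: "finite S" using S finite_subset by blast
  have finR: "finite R" unfolding R_def by simp
  have dxs: "distinct xs" unfolding xs_def using finS finR ij unfolding R_def by auto
  have sxs: "set xs = {..<L}" unfolding xs_def using finS finR ij S unfolding R_def by auto
  have lxs: "length xs = L" using distinct_card[OF dxs] sxs by simp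
  define p where "p = (\<lambda>n. xs ! n)"
  have bp: "bij_betw p {..<L} {..<L}" unfolding p_def using bij_betw_nth[OF dxs] lxs sxs by simp
  have tk: "p ` {..<k} = set (take k xs)" if kL: "k \<le> L" for k
  proof
    show "p ` {..<k} \<subseteq> set (take k xs)"
    proof
      fix x assume "x \<in> p ` {..<k}"
      then obtain n where n: "n < k" "x = xs ! n" unfolding p_def by blast
      have "take k xs ! n = xs ! n" using n(1) by (rule nth_take)
      moreover have "n < length (take k xs)" using n(1) kL lxs by simp
      ultimately show "x \<in> set (take k xs)" using n(2) by (metis nth_mem)
    qed
    show "set (take k xs) \<subseteq> p ` {..<k}"
    proof
      fix x assume "x \<in> set (take k xs)"
      then obtain n where n: "n < length (take k xs)" "take k xs ! n = x" by (auto simp: in_set_conv_nth)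
      then have "n < k" by simp
      moreover have "x = xs ! n" using n nth_take[OF \<open>n < k\<close>] by simp
      ultimately show "x \<in> p ` {..<k}" unfolding p_def by blast
    qed
  qed
  define C where "C = {p ` {..<k} | k. k \<le> L}"
  have Cstd: "C \<in> staircase_std L" unfolding staircase_std_def C_def using bp by blast
  then have "?f ` C \<in> max_cells L w" using st by blast
  then obtain a b where ab: "\<forall>g\<in>genotypes L. w g \<le> aff L a b g"
      "?f ` C = {g\<in>genotypes L. w g = aff L a b g}"
    unfolding max_cells_def upper_cell_def by blast
  have lS: "length (sorted_list_of_set S) = card S" by simp
  have cL: "card S + 2 \<le> L"
  proof -
    have "card (insert j (insert i S)) \<le> card {..<L::nat}" using S ij by (intro card_mono) auto
    then show ?thesis using ij finS by simp
  qed
  have mem: "\<And>k. k \<le> L \<Longrightarrow> p ` {..<k} \<in> C" unfolding C_def by blast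
  have C0: "S \<in> C"
  proof -
    have "take (card S) xs = sorted_list_of_set S" unfolding xs_def using lS by simp
    moreover have "p ` {..<card S} = set (take (card S) xs)" using tk cL by simp
    ultimately have "p ` {..<card S} = S" using finS by simp
    moreover have "p ` {..<card S} \<in> C" using mem cL by simp
    ultimately show ?thesis by simp
  qed
  have C1: "insert i S \<in> C"
  proof -
    have "take (card S + 1) xs = sorted_list_of_set S @ [i]" unfolding xs_def using lS by simp
    moreover have "p ` {..<card S + 1} = set (take (card S + 1) xs)" using tk cL by simp
    ultimately have "p ` {..<card S + 1} = insert i S" using finS by simp
    moreover have "p ` {..<card S + 1} \<in> C" using mem cL by simp
    ultimately show ?thesis by simp
  qed
  have C2: "insert j (insert i S) \<in> C"
  proof -
    have "take (card S + 2) xs = sorted_list_of_set S @ [i,j]" unfolding xs_def using lS by simp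
    moreover have "p ` {..<card S + 2} = set (take (card S + 2) xs)" using tk cL by simp
    ultimately have "p ` {..<card S + 2} = insert j (insert i S)" using finS by auto
    moreover have "p ` {..<card S + 2} \<in> C" using mem cL by simp
    ultimately show ?thesis by simp
  qed
  have C3: "insert j S \<notin> C"
  proof
    assume "insert j S \<in> C"
    then obtain k where k: "k \<le> L" "insert j S = set (take k xs)" unfolding C_def using tk by blast
    have "distinct (take k xs)" using dxs by simp
    then have "card (insert j S) = k" using k lxs by (simp add: distinct_card min_def)
    then have "k = card S + 1" using finS ij by simp
    moreover have "take (card S + 1) xs = sorted_list_of_set S @ [i]" unfolding xs_def using lS by simp
    ultimately have "insert j S = insert i S" using k finS by simp
    then show False using ij by blast
  qed
  have Cg: "C \<subseteq> genotypes L"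
  proof
    fix X assume "X \<in> C"
    then obtain k where "k \<le> L" "X = p ` {..<k}" unfolding C_def by blast
    then have "X = set (take k xs)" using tk by simp
    then have "X \<subseteq> set xs" using set_take_subset by metis
    then show "X \<in> genotypes L" using sxs unfolding genotypes_def by simp
  qed
  have inC: "\<And>X. X \<in> C \<Longrightarrow> w (?f X) = aff L a b (?f X)"
  proof -
    fix X assume "X \<in> C"
    then have "?f X \<in> ?f ` C" by (rule imageI)
    then have "?f X \<in> {g\<in>genotypes L. w g = aff L a b g}" using ab(2) by simp
    then show "w (?f X) = aff L a b (?f X)" by simp
  qed
  have gS: "S \<in> genotypes L" "insert i S \<in> genotypes L" "insert j S \<in> genotypes L" "insert j (insert i S) \<in> genotypes L"
    using S ij unfolding genotypes_def by auto
  have e0: "w (?f S) = aff L a b (?f S)" using inC C0 by simp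
  have e1: "w (?f (insert i S)) = aff L a b (?f (insert i S))" using inC C1 by simp
  have e2: "w (?f (insert j (insert i S))) = aff L a b (?f (insert j (insert i S)))" using inC C2 by simp
  have fj: "?f (insert j S) \<in> genotypes L" using cs_genotypes[OF bj FL gS(3)] .
  have e3: "w (?f (insert j S)) \<noteq> aff L a b (?f (insert j S))"
  proof
    assume "w (?f (insert j S)) = aff L a b (?f (insert j S))"
    then have "?f (insert j S) \<in> {g\<in>genotypes L. w g = aff L a b g}" using fj by simp
    then have "?f (insert j S) \<in> ?f ` C" using ab(2) by simp
    then obtain X where X: "X \<in> C" "?f (insert j S) = ?f X" by (rule imageE) simp
    have "X \<in> genotypes L" using X(1) Cg by (rule subsetD[rotated])
    then have "insert j S = X" using cs_inj[OF bj gS(3)] X(2) by simp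
    then show False using C3 \<open>X \<in> C\<close> by blast
  qed
  have e4: "w (?f (insert j S)) < aff L a b (?f (insert j S))" using ab(1) fj e3 by force
  have par: "aff L a b (?f S) + aff L a b (?f (insert j (insert i S))) =
     aff L a b (?f (insert i S)) + aff L a b (?f (insert j S))"
  proof (rule aff_par, intro allI impI)
    fix k assume k: "k < L"
    let ?m = "inv_into {..<L} \<sigma> k"
    have sub: "S \<subseteq> {..<L}" "insert i S \<subseteq> {..<L}" "insert j S \<subseteq> {..<L}" "insert j (insert i S) \<subseteq> {..<L}"
      using gS unfolding genotypes_def by auto
    show "coord (?f S) k + coord (?f (insert j (insert i S))) k = coord (?f (insert i S)) k + coord (?f (insert j S)) k"
      unfolding cs_coord[OF bj sub(1) k] cs_coord[OF bj sub(2) k] cs_coord[OF bj sub(3) k] cs_coord[OF bj sub(4) k]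
      using ij by auto
  qed
  show ?thesis using e0 e1 e2 e4 par by linarith
qed



theorem theorem2:
  fixes L :: nat and w :: "nat set \<Rightarrow> real"
  assumes "L \<in> {4, 5}"
    and "\<forall>g\<in>genotypes L. w g \<ge> 0"
    and "generic L w"
    and "staircase L (max_cells L w)"
  shows "card {g. peak L w g} \<le> 4"
proof -
  obtain \<sigma> F where bj: "bij_betw \<sigma> {..<L} {..<L}" and FL: "F \<subseteq> {..<L}"
    and st: "max_cells L w = (\<lambda>C. cube_sym \<sigma> F ` C) ` staircase_std L"
    using assms(4) unfolding staircase_def by blast
  let ?f = "cube_sym \<sigma> F"
  have sq: "\<And>S i j. S \<subseteq> {..<L} \<Longrightarrow> i < L \<Longrightarrow> j < L \<Longrightarrow> i \<noteq> j \<Longrightarrow> i \<notin> S \<Longrightarrow> j \<notin> S \<Longrightarrow>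
     w (?f (insert i S)) + w (?f (insert j S)) < w (?f S) + w (?f (insert j (insert i S)))"
    using square[OF st bj FL] by blast
  have mono: "\<And>D A i. finite D \<Longrightarrow> A \<union> D \<subseteq> {..<L} \<Longrightarrow> i < L \<Longrightarrow> i \<notin> A \<union> D \<Longrightarrow>
     w (?f (insert i A)) - w (?f A) \<le> w (?f (insert i (A \<union> D))) - w (?f (A \<union> D))"
    by (rule mono_delta[where v = "\<lambda>X. w (?f X)" and L = L], rule sq) auto
  define Q where "Q = {X\<in>genotypes L. peak L w (?f X)}"
  have finG: "finite (genotypes L)" unfolding genotypes_Pow by simp
  have finQ: "finite Q" unfolding Q_def using finG by simp
  have sub: "{g. peak L w g} \<subseteq> ?f ` Q"
  proof
    fix g assume "g \<in> {g. peak L w g}"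
    then have pg: "peak L w g" by simp
    then have "g \<in> genotypes L" unfolding peak_def by simp
    then obtain X where X: "X \<in> genotypes L" "?f X = g" using cs_surj[OF bj FL] by blast
    then have "X \<in> Q" unfolding Q_def using pg by simp
    then show "g \<in> ?f ` Q" using X(2) by blast
  qed
  have "card {g. peak L w g} \<le> card (?f ` Q)" using sub finQ by (intro card_mono) auto
  also have "\<dots> \<le> card Q" using finQ by (rule card_image_le)
  also have "\<dots> \<le> 4"
  proof (rule comb)
    show "Q \<subseteq> Pow {..<5}" unfolding Q_def genotypes_def using assms(1) by auto
    show "\<forall>g\<in>Q. \<forall>h\<in>Q. card (g - h) \<noteq> 1"
    proof (intro ballI notI)
      fix g h assume g: "g \<in> Q" and h: "h \<in> Q" and c: "card (g - h) = 1"
      then obtain i where i: "g - h = {i}" by (meson card_1_singletonE)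
      have gG: "g \<in> genotypes L" and pg: "peak L w (?f g)" using g unfolding Q_def by auto
      have hG: "h \<in> genotypes L" and ph: "peak L w (?f h)" using h unfolding Q_def by auto
      have ig: "i \<in> g" "i \<notin> h" using i by auto
      have iL: "i < L" using ig gG unfolding genotypes_def by auto
      have g1: "g - {i} \<in> genotypes L" using gG unfolding genotypes_def by auto
      have h1: "insert i h \<in> genotypes L" using hG iL unfolding genotypes_def by auto
      have "hamming_neighbour (?f g) (?f (g - {i}))"
        by (rule cs_hamming[OF bj gG g1]) (use ig in auto)
      then have lt1: "w (?f (g - {i})) < w (?f g)"
        using pg cs_genotypes[OF bj FL g1] unfolding peak_def by blast
      have "hamming_neighbour (?f h) (?f (insert i h))"
        by (rule cs_hamming[OF bj hG h1]) (use ig in auto)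
      then have lt2: "w (?f (insert i h)) < w (?f h)"
        using ph cs_genotypes[OF bj FL h1] unfolding peak_def by blast
      have fin: "finite (h - (g - {i}))" using hG unfolding genotypes_def by (auto intro: finite_subset)
      have un: "(g - {i}) \<union> (h - (g - {i})) = h" using i by auto
      have ins: "insert i (g - {i}) = g" using ig by auto
      have "w (?f (insert i (g - {i}))) - w (?f (g - {i})) \<le>
            w (?f (insert i ((g - {i}) \<union> (h - (g - {i}))))) - w (?f ((g - {i}) \<union> (h - (g - {i}))))"
      proof (rule mono[OF fin])
        show "g - {i} \<union> (h - (g - {i})) \<subseteq> {..<L}" using un hG unfolding genotypes_def by simp
        show "i < L" by (rule iL)
        show "i \<notin> g - {i} \<union> (h - (g - {i}))" using un ig by simp
      qed
      then have "w (?f g) - w (?f (g - {i})) \<le> w (?f (insert i h)) - w (?f h)"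
        unfolding un ins .
      then show False using lt1 lt2 by linarith
    qed
  qed
  finally show ?thesis .
qed


end
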